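(* Let $p\in(0,1)$, $N=1/(1-p)$, $r\ge0$ an integer and $n\ge0$ even. If $G=(U,w,w')$ is a melonic graph of order $n$, then $$\frac{1}{(2n+1)^n}\,p^{(2n+1)r}\le \mathcal A_r(G).$$
   Context: Trees. A 2-rooted ternary tree of order $n$ is a finite plane tree $U$ with a root vertex of degree 2 and $n$ true vertices of degree 4; each edge is internal or a leaf (half-edge). Each true vertex $v$ has parent edge $e_1(v)$ (towards the root) and ordered children edges $e_2(v),e_3(v),e_4(v)$. One root edge has type $\alpha$, the other $\bar\alpha$; if $e_1(v)$ has type $\tau$ then $e_2(v)$ has the other type and $e_3(v),e_4(v)$ have type $\tau$. Leaves of type $\alpha$ are leaves, of type $\bar\alpha$ anti-leaves ($n+1$ each). A heap-ordering labels true vertices bijectively by $\{1,\dots,n\}$, increasing from parent to child. Graphs. For even $n$, a graph of order $n$ is $G=(U,w,w')$: $U$ heap-ordered; $w$ a bijection leaves $\to$ anti-leaves (dashed edges; internal edges are solid); $w'$ a partition of true vertices into $n/2$ pairs (wavy edges) with, for each pair $\{v,v'\}$ ($v$ of smaller label), one of eight propagators in $(S,j,k)=(S_v,j_v,k_v)$, $(S',j',k')=(S_{v'},j_{v'},k_{v'})$: $\delta_{jj'}\delta_{kk'}$, $\delta_{j,S-j'}\delta_{kk'}$, $\delta_{jj'}\delta_{k,S-k'}$, $\delta_{j,S-j'}\delta_{k,S-k'}$, $\delta_{jk'}\delta_{kj'}$, $\delta_{j,S-k'}\delta_{kj'}$, $\delta_{jk'}\delta_{k,S-j'}$, $\delta_{j,S-k'}\delta_{k,S-j'}$,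 together with $S=S'$. Amplitude. A momentum attribution gives each true vertex $S_v\ge0$, $0\le j_v,k_v\le S_v$ and momenta $j_v,S_v-j_v,k_v,S_v-k_v$ to the ends at $v$ of $e_1,\dots,e_4$. It is admissible (for root momentum $r$) if solid edges get equal momenta at both ends, both root edges carry momentum $r$, every dashed edge $e$ joins leaves of equal momentum $m(e)$, and every wavy edge satisfies $S_v=S_{v'}$ and its propagator. $\mathcal A_r(G):=N^{-n}\sum_{\text{admissible}}\prod_{e\text{ dashed}}p^{m(e)}$. Melonic graphs. Each propagator (with $S=S'$) induces a bijection from the edge-ends at $v$ to those at $v'$ (matching identified momenta). For two true vertices joined by three edges, the leading propagator is the one whose bijection maps the $v$-end of each joining edge to its $v'$-end. The trivial graph ($n=0$) is the root with a leaf and an anti-leaf joined by a dashed edge. A graph is melonic if (ignoring heap-orderings) it arises from the trivial graph by repeatedly inserting two new true vertices $v,v'$, joined to each other by three edges and by a wavy edge carrying the leading propagator, in one of these ways: (I) into a dashed edge $\{x,y\}$: $e_1(v)$ at $x$, $e_1(v')$ at $y$, dashed edges $e_2(v)$–$e_2(v')$ and $\{e_3(v),e_4(v)\}$ bijectively to $\{e_3(v'),e_4(v')\}$; (II) into a dashed edge $\{z,z'\}$: $e_1(v)$ at $z$, $e_1(v')=e_2(v)$, dashed edges $e_2(v')$–$z'$ and $\{e_3(v),e_4(v)\}$ bijectively to $\{e_3(v'),e_4(v')\}$; (III) into a dashed edge $\{z,z'\}$: $e_1(v)$ at $z$, $e_1(v')=e_a(v)$ ($a\in\{3,4\}$, $b$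 the other), dashed edges $e_2(v)$–(one of $e_3(v'),e_4(v')$), $e_b(v)$–$e_2(v')$, remaining child leaf of $v'$–$z'$; (IIs) into a solid edge from $u$ to child $z$: $v$ below $u$, $e_1(v')=e_2(v)$, $e_1(z)=e_2(v')$, dashed edges $\{e_3(v),e_4(v)\}$ bijectively to $\{e_3(v'),e_4(v')\}$; (IIIs) as (IIs) but $e_1(v')=e_a(v)$, $a\in\{3,4\}$, $e_1(z)=e_c(v')$, $c\in\{3,4\}$, dashed edges $e_2(v)$–(other of $e_3(v'),e_4(v')$) and $e_b(v)$–$e_2(v')$. *)

theory Defs
  imports "HOL-Analysis.Analysis"
begin

text \<open>An edge-end is a pair (u,i): u = 0 is the root (slots i = 1,2, the two ordered
root edges); u \<in> {1..n} is a true vertex (identified with its heap label) and slot i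
is the end of e_i(u), i = 1..4.  The tree structure is given by par v = the end
(at the parent vertex) to which the parent edge e_1(v) is attached.\<close>

type_synonym vend = "nat \<times> nat"

text \<open>Type of edges: True = alpha, False = anti-alpha.  Convention: the first root
edge has type alpha, the second type anti-alpha.  The first argument is fuel
(depth bound).\<close>
fun etype :: "nat \<Rightarrow> (nat \<Rightarrow> vend) \<Rightarrow> vend \<Rightarrow> bool" where
  "etype 0 P e = (snd e = 1)"
| "etype (Suc f) P (u, i) =
     (if u = 0 then i = 1
      else (if i = 2 then \<not> etype f P (P u) else etype f P (P u)))"

record graph =
  par :: "nat \<Rightarrow> vend"
  wd  :: "vend \<Rightarrow> vend"                  \<comment> \<open>w : leaves \<rightarrow> anti-leaves (dashed edges)\<close>
  wv  :: "(nat \<times> nat \<times> nat) set"         \<comment> \<open>w': wavy edges (v, v', t), v < v', propagator t\<close>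

definition child_ends :: "nat \<Rightarrow> vend set" where
  "child_ends n = {(0,1),(0,2)} \<union> {(u,i). u \<in> {1..n} \<and> i \<in> {2,3,4}}"

definition is_alpha :: "nat \<Rightarrow> graph \<Rightarrow> vend \<Rightarrow> bool" where
  "is_alpha n G e = etype (Suc n) (par G) e"

definition leaf_ends :: "nat \<Rightarrow> graph \<Rightarrow> vend set" where
  "leaf_ends n G = child_ends n - par G ` {1..n}"

definition leaves :: "nat \<Rightarrow> graph \<Rightarrow> vend set" where
  "leaves n G = {e \<in> leaf_ends n G. is_alpha n G e}"

definition antileaves :: "nat \<Rightarrow> graph \<Rightarrow> vend set" where
  "antileaves n G = {e \<in> leaf_ends n G. \<not> is_alpha n G e}"

definition dashed :: "nat \<Rightarrow> graph \<Rightarrow> vend set set" where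
  "dashed n G = {{x, wd G x} | x. x \<in> leaves n G}"

text \<open>G is a graph of order n: heap-ordered 2-rooted ternary tree on the true
vertices 1..n, bijection w from leaves to anti-leaves, and a partition of the true
vertices into pairs, each carrying one of the eight propagators (indexed 0..7,
oriented from the smaller label to the larger).\<close>
definition is_graph :: "nat \<Rightarrow> graph \<Rightarrow> bool" where
  "is_graph n G \<longleftrightarrow>
     even n \<and>
     (\<forall>v\<in>{1..n}. par G v \<in> child_ends n \<and> fst (par G v) < v) \<and>
     inj_on (par G) {1..n} \<and>
     bij_betw (wd G) (leaves n G) (antileaves n G) \<and>
     (\<forall>(a, b, t)\<in>wv G. 1 \<le> a \<and> a < b \<and> b \<le> n \<and> t < 8) \<and>
     (\<forall>v\<in>{1..n}. \<exists>!x. x \<in> wv G \<and> (fst x = v \<or> fst (snd x) = v))"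

fun prop_ok :: "nat \<Rightarrow> nat \<times> nat \<times> nat \<Rightarrow> nat \<times> nat \<times> nat \<Rightarrow> bool" where
  "prop_ok t (S, j, k) (S', j', k') =
     (S = S' \<and>
      (if t = 0 then j = j' \<and> k = k'
       else if t = 1 then j = S - j' \<and> k = k'
       else if t = 2 then j = j' \<and> k = S - k'
       else if t = 3 then j = S - j' \<and> k = S - k'
       else if t = 4 then j = k' \<and> k = j'
       else if t = 5 then j = S - k' \<and> k = j'
       else if t = 6 then j = k' \<and> k = S - j'
       else j = S - k' \<and> k = S - j'))"

definition mom :: "nat \<Rightarrow> (nat \<Rightarrow> nat) \<Rightarrow> (nat \<Rightarrow> nat) \<Rightarrow> (nat \<Rightarrow> nat) \<Rightarrow> vend \<Rightarrow> nat" where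
  "mom r S j k e = (let (u, i) = e in
     if u = 0 then r
     else if i = 1 then j u else if i = 2 then S u - j u else if i = 3 then k u else S u - k u)"

type_synonym attribution = "(nat \<Rightarrow> nat) \<times> (nat \<Rightarrow> nat) \<times> (nat \<Rightarrow> nat)"

definition admissible :: "nat \<Rightarrow> nat \<Rightarrow> graph \<Rightarrow> attribution \<Rightarrow> bool" where
  "admissible n r G A \<longleftrightarrow> (case A of (S, j, k) \<Rightarrow>
     (\<forall>v. v \<notin> {1..n} \<longrightarrow> S v = 0 \<and> j v = 0 \<and> k v = 0) \<and>
     (\<forall>v\<in>{1..n}. j v \<le> S v \<and> k v \<le> S v) \<and>
     (\<forall>v\<in>{1..n}. mom r S j k (v, 1) = mom r S j k (par G v)) \<and>
     (\<forall>x\<in>leaves n G. mom r S j k x = mom r S j k (wd G x)) \<and>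
     (\<forall>(a, b, t)\<in>wv G. prop_ok t (S a, j a, k a) (S b, j b, k b)))"

text \<open>A_r(G) = N^{-n} * sum over admissible attributions of the product over dashed
edges {x, w x} (x a leaf) of p^{m(e)}; as an (always defined) sum in ennreal.\<close>
definition amplitude :: "real \<Rightarrow> nat \<Rightarrow> nat \<Rightarrow> graph \<Rightarrow> ennreal" where
  "amplitude p n r G =
     ennreal (1 / (1 / (1 - p)) ^ n) *
     (\<Sum>\<^sub>\<infinity>A\<in>{A. admissible n r G A}.
        (case A of (S, j, k) \<Rightarrow> ennreal (\<Prod>x\<in>leaves n G. p ^ mom r S j k x)))"

text \<open>Bijection on edge-ends (slots 1..4 at v to slots at v') induced by propagator t.\<close>
definition pbij :: "nat \<Rightarrow> nat \<Rightarrow> nat" where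
  "pbij t i = [[1,2,3,4],[2,1,3,4],[1,2,4,3],[2,1,4,3],
               [3,4,1,2],[4,3,1,2],[3,4,2,1],[4,3,2,1]] ! t ! (i - 1)"

text \<open>Unlabelled (not heap-ordered) structures used in the melonic construction:
vertex names are arbitrary nonzero naturals, root is 0, dashed edges as unordered
pairs of ends, wavy edges as oriented triples (a, b, t).\<close>
record pre =
  pV :: "nat set"
  pP :: "nat \<Rightarrow> vend"
  pD :: "vend set set"
  pW :: "(nat \<times> nat \<times> nat) set"

text \<open>wt is a wavy edge between the new vertices v, v' carrying the leading propagator,
J listing the joining edges as (slot at v, slot at v').  Either orientation of
storage is allowed; the bijection of the stored propagator goes from the first
to the second stored vertex.\<close>
definition leading_wavy :: "nat \<Rightarrow> nat \<Rightarrow> (nat \<times> nat) list \<Rightarrow> nat \<times> nat \<times> nat \<Rightarrow> bool" where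
  "leading_wavy v v' J wt \<longleftrightarrow>
     (\<exists>t<8. wt = (v, v', t) \<and> (\<forall>(i, i')\<in>set J. pbij t i = i')) \<or>
     (\<exists>t<8. wt = (v', v, t) \<and> (\<forall>(i, i')\<in>set J. pbij t i' = i))"

definition fresh2 :: "pre \<Rightarrow> nat \<Rightarrow> nat \<Rightarrow> bool" where
  "fresh2 M v v' \<longleftrightarrow> v \<noteq> v' \<and> v \<noteq> 0 \<and> v' \<noteq> 0 \<and> v \<notin> pV M \<and> v' \<notin> pV M"

inductive_set melonic_pre :: "pre set" where
  trivial: "\<lparr>pV = {}, pP = (\<lambda>_. (0, 0)), pD = {{(0,1), (0,2)}}, pW = {}\<rparr> \<in> melonic_pre"
| ins_I: "\<lbrakk>M \<in> melonic_pre; fresh2 M v v'; {x, y} \<in> pD M; x \<noteq> y; c \<in> {3,4};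
          leading_wavy v v' [(2,2), (3,c), (4,7-c)] wt\<rbrakk> \<Longrightarrow>
   \<lparr>pV = pV M \<union> {v, v'}, pP = (pP M)(v := x, v' := y),
    pD = (pD M - {{x, y}}) \<union> {{(v,2),(v',2)}, {(v,3),(v',c)}, {(v,4),(v',7-c)}},
    pW = pW M \<union> {wt}\<rparr> \<in> melonic_pre"
| ins_II: "\<lbrakk>M \<in> melonic_pre; fresh2 M v v'; {z, z'} \<in> pD M; z \<noteq> z'; c \<in> {3,4};
          leading_wavy v v' [(2,1), (3,c), (4,7-c)] wt\<rbrakk> \<Longrightarrow>
   \<lparr>pV = pV M \<union> {v, v'}, pP = (pP M)(v := z, v' := (v,2)),
    pD = (pD M - {{z, z'}}) \<union> {{(v',2), z'}, {(v,3),(v',c)}, {(v,4),(v',7-c)}},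
    pW = pW M \<union> {wt}\<rparr> \<in> melonic_pre"
| ins_III: "\<lbrakk>M \<in> melonic_pre; fresh2 M v v'; {z, z'} \<in> pD M; z \<noteq> z'; a \<in> {3,4}; c \<in> {3,4};
          leading_wavy v v' [(a,1), (2,c), (7-a,2)] wt\<rbrakk> \<Longrightarrow>
   \<lparr>pV = pV M \<union> {v, v'}, pP = (pP M)(v := z, v' := (v,a)),
    pD = (pD M - {{z, z'}}) \<union> {{(v,2),(v',c)}, {(v,7-a),(v',2)}, {(v',7-c), z'}},
    pW = pW M \<union> {wt}\<rparr> \<in> melonic_pre"
| ins_IIs: "\<lbrakk>M \<in> melonic_pre; fresh2 M v v'; z \<in> pV M; c \<in> {3,4};
          leading_wavy v v' [(2,1), (3,c), (4,7-c)] wt\<rbrakk> \<Longrightarrow>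
   \<lparr>pV = pV M \<union> {v, v'}, pP = (pP M)(v := pP M z, v' := (v,2), z := (v',2)),
    pD = pD M \<union> {{(v,3),(v',c)}, {(v,4),(v',7-c)}},
    pW = pW M \<union> {wt}\<rparr> \<in> melonic_pre"
| ins_IIIs: "\<lbrakk>M \<in> melonic_pre; fresh2 M v v'; z \<in> pV M; a \<in> {3,4}; c \<in> {3,4};
          leading_wavy v v' [(a,1), (2,7-c), (7-a,2)] wt\<rbrakk> \<Longrightarrow>
   \<lparr>pV = pV M \<union> {v, v'}, pP = (pP M)(v := pP M z, v' := (v,a), z := (v',c)),
    pD = pD M \<union> {{(v,2),(v',7-c)}, {(v,7-a),(v',2)}},
    pW = pW M \<union> {wt}\<rparr> \<in> melonic_pre"

definition mape :: "(nat \<Rightarrow> nat) \<Rightarrow> vend \<Rightarrow> vend" where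
  "mape \<sigma> e = (\<sigma> (fst e), snd e)"

definition melonic :: "nat \<Rightarrow> graph \<Rightarrow> bool" where
  "melonic n G \<longleftrightarrow> is_graph n G \<and>
     (\<exists>M \<sigma>. M \<in> melonic_pre \<and> \<sigma> 0 = 0 \<and> bij_betw \<sigma> (pV M) {1..n} \<and>
        (\<forall>v\<in>pV M. par G (\<sigma> v) = mape \<sigma> (pP M v)) \<and>
        dashed n G = (\<lambda>d. mape \<sigma> ` d) ` pD M \<and>
        wv G = (\<lambda>(a, b, t). (\<sigma> a, \<sigma> b, t)) ` pW M)"

end

theory Submission
  imports Defs
begin

definition m4 :: "nat \<Rightarrow> nat \<Rightarrow> nat \<Rightarrow> nat \<Rightarrow> nat" where
  "m4 s a b i = (if i = 1 then a else if i = 2 then s - a else if i = 3 then b else s - b)"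

lemma mom_nz: "u \<noteq> 0 \<Longrightarrow> mom r S j k (u, i) = m4 (S u) (j u) (k u) i"
  by (simp add: mom_def m4_def)

lemma mom_root: "mom r S j k (0, i) = r"
  by (simp add: mom_def)

definition w1 :: "nat \<Rightarrow> nat \<Rightarrow> nat \<Rightarrow> nat \<Rightarrow> nat \<times> nat" where
  "w1 t s j k = [(j,k),(s-j,k),(j,s-k),(s-j,s-k),(k,j),(k,s-j),(s-k,j),(s-k,s-j)] ! t"

definition w2 :: "nat \<Rightarrow> nat \<Rightarrow> nat \<Rightarrow> nat \<Rightarrow> nat \<times> nat" where
  "w2 t s j k = [(j,k),(s-j,k),(j,s-k),(s-j,s-k),(k,j),(s-k,j),(k,s-j),(s-k,s-j)] ! t"

lemma L1:
  assumes "t < 8" "j \<le> s" "k \<le> s"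
  shows "fst (w1 t s j k) \<le> s \<and> snd (w1 t s j k) \<le> s \<and>
    prop_ok t (s,j,k) (s, fst (w1 t s j k), snd (w1 t s j k)) \<and>
    (\<forall>i\<in>{1,2,3,4}. m4 s (fst (w1 t s j k)) (snd (w1 t s j k)) (pbij t i) = m4 s j k i)"
proof -
  have "t=0 \<or> t=1 \<or> t=2 \<or> t=3 \<or> t=4 \<or> t=5 \<or> t=6 \<or> t=7" using assms(1) by arith
  then show ?thesis using assms(2,3) by (elim disjE) (auto simp: w1_def pbij_def m4_def)
qed

lemma L2:
  assumes "t < 8" "j \<le> s" "k \<le> s"
  shows "fst (w2 t s j k) \<le> s \<and> snd (w2 t s j k) \<le> s \<and>
    prop_ok t (s, fst (w2 t s j k), snd (w2 t s j k)) (s,j,k) \<and>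
    (\<forall>i\<in>{1,2,3,4}. m4 s j k (pbij t i) = m4 s (fst (w2 t s j k)) (snd (w2 t s j k)) i)"
proof -
  have "t=0 \<or> t=1 \<or> t=2 \<or> t=3 \<or> t=4 \<or> t=5 \<or> t=6 \<or> t=7" using assms(1) by arith
  then show ?thesis using assms(2,3) by (elim disjE) (auto simp: w2_def pbij_def m4_def)
qed

declare prop_ok.simps[simp del]

definition wok :: "nat \<Rightarrow> nat \<Rightarrow> nat \<times> nat \<times> nat \<Rightarrow> nat \<Rightarrow> nat \<Rightarrow> nat \<Rightarrow> nat \<Rightarrow> nat \<Rightarrow> bool" where
  "wok v v' wt s j k j' k' = (case wt of (a, b, t) \<Rightarrow>
     (a = v \<and> b = v' \<and> prop_ok t (s,j,k) (s,j',k')) \<or> (a = v' \<and> b = v \<and> prop_ok t (s,j',k') (s,j,k)))"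

lemma LC:
  assumes "leading_wavy v v' J wt" "J \<noteq> []" "set J \<subseteq> {1,2,3,4} \<times> {1,2,3,4}" "j \<le> s" "k \<le> s"
  shows "\<exists>j' k'. j' \<le> s \<and> k' \<le> s \<and> (\<forall>(i,i')\<in>set J. m4 s j' k' i' = m4 s j k i) \<and>
     wok v v' wt s j k j' k'"
  using assms(1) unfolding leading_wavy_def
proof
  assume "\<exists>t<8. wt = (v, v', t) \<and> (\<forall>(i, i')\<in>set J. pbij t i = i')"
  then obtain t where t: "t < 8" "wt = (v, v', t)" "\<forall>(i, i')\<in>set J. pbij t i = i'" by blast
  show ?thesis
    apply (rule exI[of _ "fst (w1 t s j k)"], rule exI[of _ "snd (w1 t s j k)"])
    using L1[OF t(1) assms(4,5)] t assms(3) by (fastforce simp: wok_def)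
next
  assume "\<exists>t<8. wt = (v', v, t) \<and> (\<forall>(i, i')\<in>set J. pbij t i' = i)"
  then obtain t where t: "t < 8" "wt = (v', v, t)" "\<forall>(i, i')\<in>set J. pbij t i' = i" by blast
  show ?thesis
    apply (rule exI[of _ "fst (w2 t s j k)"], rule exI[of _ "snd (w2 t s j k)"])
    using L2[OF t(1) assms(4,5)] t assms(3) by (fastforce simp: wok_def)
qed

definition pdok :: "pre \<Rightarrow> nat \<Rightarrow> (nat \<Rightarrow> nat) \<Rightarrow> (nat \<Rightarrow> nat) \<Rightarrow> (nat \<Rightarrow> nat) \<Rightarrow> bool" where
  "pdok M r S j k \<longleftrightarrow> (\<forall>u\<in>pV M. mom r S j k (u,1) = mom r S j k (pP M u)) \<and>
     (\<forall>d\<in>pD M. \<forall>x\<in>d. \<forall>y\<in>d. mom r S j k x = mom r S j k y)"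

definition padm :: "pre \<Rightarrow> nat \<Rightarrow> attribution \<Rightarrow> bool" where
  "padm M r A \<longleftrightarrow> (case A of (S, j, k) \<Rightarrow>
     (\<forall>u. u \<notin> pV M \<longrightarrow> S u = 0 \<and> j u = 0 \<and> k u = 0) \<and>
     (\<forall>u. j u \<le> S u \<and> k u \<le> S u) \<and> pdok M r S j k \<and>
     (\<forall>(a, b, t)\<in>pW M. prop_ok t (S a, j a, k a) (S b, j b, k b)))"

definition pstruct :: "pre \<Rightarrow> bool" where
  "pstruct M \<longleftrightarrow> finite (pV M) \<and> 0 \<notin> pV M \<and> (\<forall>u\<in>pV M. fst (pP M u) \<in> insert 0 (pV M)) \<and>
     (\<forall>d\<in>pD M. \<forall>e\<in>d. fst e \<in> insert 0 (pV M)) \<and> (\<forall>(a, b, t)\<in>pW M. a \<in> pV M \<and> b \<in> pV M)"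

definition fam :: "pre \<Rightarrow> nat \<Rightarrow> (nat list \<Rightarrow> attribution) \<Rightarrow> bool" where
  "fam M r F \<longleftrightarrow> inj_on F {xs. length xs = card (pV M)} \<and>
     (\<forall>xs. length xs = card (pV M) \<longrightarrow> padm M r (F xs) \<and> (\<forall>u. fst (F xs) u \<le> r + sum_list xs))"

lemma mom_le: "j (fst e) \<le> S (fst e) \<Longrightarrow> k (fst e) \<le> S (fst e) \<Longrightarrow> mom r S j k e \<le> max r (S (fst e))"
  by (cases e) (auto simp: mom_def)

lemma mom_upd:
  "fst e \<noteq> v \<Longrightarrow> fst e \<noteq> v' \<Longrightarrow>
   mom r (S(v:=s1,v':=s2)) (j(v:=a1,v':=a2)) (k(v:=b1,v':=b2)) e = mom r S j k e"
  by (cases e) (auto simp: mom_def)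

lemma step:
  assumes ps: "pstruct M" and fm: "fam M r F" and fr: "fresh2 M v v'"
    and ez: "fst ez \<in> insert 0 (pV M)"
    and lw: "leading_wavy v v' J wt" "J \<noteq> []" "set J \<subseteq> {1,2,3,4} \<times> {1,2,3,4}"
    and V': "pV M' = pV M \<union> {v, v'}" and W': "pW M' = pW M \<union> {wt}"
    and KEY: "\<And>S j k a b j' k'. padm M r (S,j,k) \<Longrightarrow>
        j' \<le> mom r S j k ez + a + b \<Longrightarrow> k' \<le> mom r S j k ez + a + b \<Longrightarrow>
        (\<forall>(i,i')\<in>set J. m4 (mom r S j k ez + a + b) j' k' i' = m4 (mom r S j k ez + a + b) (mom r S j k ez) b i) \<Longrightarrow>
        pdok M' r (S(v:=mom r S j k ez + a + b, v':=mom r S j k ez + a + b))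
                  (j(v:=mom r S j k ez, v':=j')) (k(v:=b, v':=k'))"
  shows "\<exists>F'. fam M' r F'"
proof -
  have fin: "finite (pV M)" and v0: "v \<noteq> 0" "v' \<noteq> 0" "v \<noteq> v'" "v \<notin> pV M" "v' \<notin> pV M"
    using ps fr by (auto simp: pstruct_def fresh2_def)
  have cardM': "card (pV M') = Suc (Suc (card (pV M)))"
    using fin v0 V' by (simp add: card_insert_if)
  define PJ where "PJ = (\<lambda>s m b jk. fst jk \<le> s \<and> snd jk \<le> s \<and>
      (\<forall>(i,i')\<in>set J. m4 s (fst jk) (snd jk) i' = m4 s m b i) \<and> wok v v' wt s m b (fst jk) (snd jk))"
  have PJex: "\<And>s m b. m \<le> s \<Longrightarrow> b \<le> s \<Longrightarrow> PJ s m b (SOME jk. PJ s m b jk)"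
  proof -
    fix s m b :: nat assume "m \<le> s" "b \<le> s"
    from LC[OF lw this] obtain j' k' where "PJ s m b (j', k')" unfolding PJ_def by auto
    then show "PJ s m b (SOME jk. PJ s m b jk)" by (rule someI)
  qed
  define G where "G = (\<lambda>(A::attribution) a b. case A of (S,j,k) \<Rightarrow>
      (let m = mom r S j k ez; s = m + a + b; jk = (SOME jk. PJ s m b jk) in
       (S(v:=s,v':=s), j(v:=m,v':=fst jk), k(v:=b, v':=snd jk))))"
  define F' where "F' = (\<lambda>xs. G (F (tl (tl xs))) (hd xs) (hd (tl xs)))"
  have good: "padm M' r (G (F ys) a b) \<and> (\<forall>u. fst (G (F ys) a b) u \<le> r + sum_list (a # b # ys))"
    if len: "length ys = card (pV M)" for ys a b
  proof -
    obtain S j k where Fys: "F ys = (S, j, k)" by (cases "F ys") auto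
    have pa: "padm M r (S,j,k)" and bd: "\<forall>u. S u \<le> r + sum_list ys"
      using fm len Fys unfolding fam_def by (metis fst_conv)+
    define m where "m = mom r S j k ez"
    define s where "s = m + a + b"
    define jk where "jk = (SOME jk. PJ s m b jk)"
    have Gv: "G (F ys) a b = (S(v:=s,v':=s), j(v:=m,v':=fst jk), k(v:=b, v':=snd jk))"
      by (simp add: G_def Fys m_def s_def jk_def Let_def)
    have PJ: "PJ s m b jk" unfolding jk_def by (rule PJex) (auto simp: s_def)
    have jkS: "\<forall>u. j u \<le> S u \<and> k u \<le> S u" using pa by (simp add: padm_def)
    have mle: "m \<le> r + sum_list ys"
      using mom_le[of j ez S k r] jkS bd unfolding m_def by (metis max.bounded_iff order_trans le_add1)
    have pd: "pdok M' r (S(v:=s,v':=s)) (j(v:=m,v':=fst jk)) (k(v:=b, v':=snd jk))"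
      using KEY[OF pa, of "fst jk" a b "snd jk"] PJ unfolding PJ_def s_def m_def by simp
    have zero: "\<forall>u. u \<notin> pV M \<longrightarrow> S u = 0 \<and> j u = 0 \<and> k u = 0"
      and wv: "\<forall>(a, b, t)\<in>pW M. prop_ok t (S a, j a, k a) (S b, j b, k b)"
      using pa by (simp_all add: padm_def)
    have wvold: "\<forall>(a', b', t)\<in>pW M. a' \<in> pV M \<and> b' \<in> pV M" using ps by (simp add: pstruct_def)
    have wk: "wok v v' wt s m b (fst jk) (snd jk)" using PJ by (simp add: PJ_def)
    have wvnew: "\<forall>(a', b', t)\<in>pW M'. prop_ok t ((S(v:=s,v':=s)) a', (j(v:=m,v':=fst jk)) a', (k(v:=b, v':=snd jk)) a')
         ((S(v:=s,v':=s)) b', (j(v:=m,v':=fst jk)) b', (k(v:=b, v':=snd jk)) b')"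
    proof (intro ballI)
      fix x assume "x \<in> pW M'"
      then consider "x \<in> pW M" | "x = wt" using W' by auto
      then show "case x of (a', b', t) \<Rightarrow> prop_ok t ((S(v:=s,v':=s)) a', (j(v:=m,v':=fst jk)) a', (k(v:=b, v':=snd jk)) a')
         ((S(v:=s,v':=s)) b', (j(v:=m,v':=fst jk)) b', (k(v:=b, v':=snd jk)) b')"
      proof cases
        case 1
        then show ?thesis using wvold wv v0 by (cases x) (fastforce simp del: prop_ok.simps)
      next
        case 2
        then show ?thesis using wk v0 unfolding wok_def by (cases x) (auto simp del: prop_ok.simps)
      qed
    qed
    have z': "\<forall>u. u \<notin> pV M' \<longrightarrow> (S(v:=s,v':=s)) u = 0 \<and> (j(v:=m,v':=fst jk)) u = 0 \<and> (k(v:=b, v':=snd jk)) u = 0"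
      using zero V' by auto
    have b': "\<forall>u. (j(v:=m,v':=fst jk)) u \<le> (S(v:=s,v':=s)) u \<and> (k(v:=b, v':=snd jk)) u \<le> (S(v:=s,v':=s)) u"
      using jkS PJ by (auto simp: PJ_def s_def)
    have "padm M' r (S(v:=s,v':=s), j(v:=m,v':=fst jk), k(v:=b, v':=snd jk))"
      unfolding padm_def prod.case using z' b' pd wvnew by blast
    moreover have "\<forall>u. (S(v:=s,v':=s)) u \<le> r + sum_list (a # b # ys)"
    proof
      fix u show "(S(v:=s,v':=s)) u \<le> r + sum_list (a # b # ys)"
        using bd[rule_format, of u] mle by (auto simp: s_def)
    qed
    ultimately show ?thesis using Gv by simp
  qed
  have injG: "ys = ys' \<and> a = a' \<and> b = b'"
    if len: "length ys = card (pV M)" "length ys' = card (pV M)" and eq: "G (F ys) a b = G (F ys') a' b'"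
    for ys ys' a b a' b'
  proof -
    obtain S j k where Fys: "F ys = (S, j, k)" by (cases "F ys") auto
    obtain S2 j2 k2 where Fys2: "F ys' = (S2, j2, k2)" by (cases "F ys'") auto
    have pa: "padm M r (S,j,k)" "padm M r (S2,j2,k2)"
      using fm len Fys Fys2 unfolding fam_def by metis+
    have z1: "\<forall>u. u \<notin> pV M \<longrightarrow> S u = 0 \<and> j u = 0 \<and> k u = 0"
      and z2: "\<forall>u. u \<notin> pV M \<longrightarrow> S2 u = 0 \<and> j2 u = 0 \<and> k2 u = 0"
      using pa by (simp_all add: padm_def)
    define m where "m = mom r S j k ez"
    define m2 where "m2 = mom r S2 j2 k2 ez"
    define jk where "jk = (SOME jk. PJ (m+a+b) m b jk)"
    define jk2 where "jk2 = (SOME jk. PJ (m2+a'+b') m2 b' jk)"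
    have eq2: "(S(v:=m+a+b,v':=m+a+b), j(v:=m,v':=fst jk), k(v:=b, v':=snd jk)) =
       (S2(v:=m2+a'+b',v':=m2+a'+b'), j2(v:=m2,v':=fst jk2), k2(v:=b', v':=snd jk2))"
      using eq unfolding G_def Fys Fys2 Let_def prod.case m_def m2_def jk_def jk2_def .
    have "S = S2"
    proof
      fix u show "S u = S2 u"
        using fun_cong[OF conjunct1[OF eq2[unfolded prod.inject]], of u] z1 z2 v0
        by (cases "u = v \<or> u = v'") auto
    qed
    moreover have "j = j2"
    proof
      fix u show "j u = j2 u"
        using fun_cong[OF conjunct1[OF conjunct2[OF eq2[unfolded prod.inject]]], of u] z1 z2 v0
        by (cases "u = v \<or> u = v'") auto
    qed
    moreover have "k = k2"
    proof
      fix u show "k u = k2 u"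
        using fun_cong[OF conjunct2[OF conjunct2[OF eq2[unfolded prod.inject]]], of u] z1 z2 v0
        by (cases "u = v \<or> u = v'") auto
    qed
    ultimately have "F ys = F ys'" using Fys Fys2 by simp
    then have "ys = ys'" using fm len unfolding fam_def inj_on_def by blast
    moreover have "m = m2" using \<open>S = S2\<close> \<open>j = j2\<close> \<open>k = k2\<close> by (simp add: m_def m2_def)
    moreover have "m+a+b = m2+a'+b'" using fun_cong[OF conjunct1[OF eq2[unfolded prod.inject]], of v] v0(3) by (metis fun_upd_other fun_upd_same)
    moreover have "b = b'" using fun_cong[OF conjunct2[OF conjunct2[OF eq2[unfolded prod.inject]]], of v] v0(3) by (metis fun_upd_other fun_upd_same)
    ultimately show ?thesis by simp
  qed
  have "fam M' r F'"
    unfolding fam_def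
  proof (intro conjI; (intro allI impI)?)
    show "inj_on F' {xs. length xs = card (pV M')}"
    proof (rule inj_onI)
      fix xs xs' :: "nat list" assume "xs \<in> {xs. length xs = card (pV M')}" "xs' \<in> {xs. length xs = card (pV M')}" "F' xs = F' xs'"
      then obtain a b ys a' b' ys' where "xs = a # b # ys" "xs' = a' # b' # ys'"
        "length ys = card (pV M)" "length ys' = card (pV M)" "G (F ys) a b = G (F ys') a' b'"
        using cardM' by (auto simp: F'_def length_Suc_conv)
      then show "xs = xs'" using injG by blast
    qed
  next
    fix xs :: "nat list" assume "length xs = card (pV M')"
    then obtain a b ys where "xs = a # b # ys" "length ys = card (pV M)"
      using cardM' by (auto simp: length_Suc_conv)
    then show "padm M' r (F' xs) \<and> (\<forall>u. fst (F' xs) u \<le> r + sum_list xs)"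
      using good by (simp add: F'_def)
  qed
  then show ?thesis by blast
qed

lemma momv: "v \<noteq> 0 \<Longrightarrow> v \<noteq> v' \<Longrightarrow>
   mom r (S(v:=s1,v':=s2)) (j(v:=a1,v':=a2)) (k(v:=b1,v':=b2)) (v,i) = m4 s1 a1 b1 i"
  by (simp add: mom_nz)

lemma momv': "v' \<noteq> 0 \<Longrightarrow>
   mom r (S(v:=s1,v':=s2)) (j(v:=a1,v':=a2)) (k(v:=b1,v':=b2)) (v',i) = m4 s2 a2 b2 i"
  by (simp add: mom_nz)

lemma pair_const: "f a = f b \<Longrightarrow> \<forall>x\<in>{a,b}. \<forall>y\<in>{a,b}. f x = f y" by auto

lemma padm_D:
  assumes "padm M r (S,j,k)"
  shows "\<forall>u. u \<notin> pV M \<longrightarrow> S u = 0 \<and> j u = 0 \<and> k u = 0"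
    "\<forall>u. j u \<le> S u \<and> k u \<le> S u" "pdok M r S j k"
    "\<forall>(a, b, t)\<in>pW M. prop_ok t (S a, j a, k a) (S b, j b, k b)"
  using assms unfolding padm_def by simp_all

lemma kc1:
  assumes "v \<noteq> v'" "v \<noteq> 0" "v' \<noteq> 0" "v \<notin> V" "v' \<notin> V" "fst e \<in> insert 0 V"
  shows "mom r (S(v:=s1,v':=s2)) (j(v:=a1,v':=a2)) (k(v:=b1,v':=b2)) e = mom r S j k e"
  apply (rule mom_upd) using assms by auto

lemma kc2:
  assumes "padm M r (S,j,k)"
  shows "\<And>u. u \<in> pV M \<Longrightarrow> mom r S j k (u,1) = mom r S j k (pP M u)"
    "\<And>d e e'. d \<in> pD M \<Longrightarrow> e \<in> d \<Longrightarrow> e' \<in> d \<Longrightarrow> mom r S j k e = mom r S j k e'"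
  using padm_D(3)[OF assms] unfolding pdok_def by blast+

lemma kc3:
  assumes "padm M r (S,j,k)"
  shows "j (fst e) \<le> S (fst e)" "k (fst e) \<le> S (fst e)" using padm_D(2)[OF assms] by blast+

lemma ps_D:
  assumes "pstruct M"
  shows "finite (pV M)" "0 \<notin> pV M" "\<And>u. u \<in> pV M \<Longrightarrow> fst (pP M u) \<in> insert 0 (pV M)"
    "\<And>d e. d \<in> pD M \<Longrightarrow> e \<in> d \<Longrightarrow> fst e \<in> insert 0 (pV M)"
    "\<And>a b t. (a, b, t) \<in> pW M \<Longrightarrow> a \<in> pV M \<and> b \<in> pV M"
  using assms unfolding pstruct_def by blast+

lemma fr_D:
  assumes "fresh2 M v v'"
  shows "v \<noteq> v'" "v \<noteq> 0" "v' \<noteq> 0" "v \<notin> pV M" "v' \<notin> pV M"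
  using assms unfolding fresh2_def by blast+

lemma key_common:
  assumes ps: "pstruct M" and fr: "fresh2 M v v'" and pa: "padm M r (S,j,k)"
  shows "\<And>e. fst e \<in> insert 0 (pV M) \<Longrightarrow>
      mom r (S(v:=s1,v':=s2)) (j(v:=a1,v':=a2)) (k(v:=b1,v':=b2)) e = mom r S j k e"
    and "\<And>i. mom r (S(v:=s1,v':=s2)) (j(v:=a1,v':=a2)) (k(v:=b1,v':=b2)) (v,i) = m4 s1 a1 b1 i"
    and "\<And>i. mom r (S(v:=s1,v':=s2)) (j(v:=a1,v':=a2)) (k(v:=b1,v':=b2)) (v',i) = m4 s2 a2 b2 i"
    and "\<And>u. u \<in> pV M \<Longrightarrow> fst (pP M u) \<in> insert 0 (pV M)"
    and "\<And>d e. d \<in> pD M \<Longrightarrow> e \<in> d \<Longrightarrow> fst e \<in> insert 0 (pV M)"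
    and "\<And>u. u \<in> pV M \<Longrightarrow> mom r S j k (u,1) = mom r S j k (pP M u)"
    and "\<And>d e e'. d \<in> pD M \<Longrightarrow> e \<in> d \<Longrightarrow> e' \<in> d \<Longrightarrow> mom r S j k e = mom r S j k e'"
    and "\<And>u. u \<in> pV M \<Longrightarrow> u \<noteq> v \<and> u \<noteq> v'"
    and "v \<noteq> v'" "\<And>u. j u \<le> S u" "\<And>u. k u \<le> S u"
proof -
  note f = fr_D[OF fr]
  show "\<And>e. fst e \<in> insert 0 (pV M) \<Longrightarrow>
      mom r (S(v:=s1,v':=s2)) (j(v:=a1,v':=a2)) (k(v:=b1,v':=b2)) e = mom r S j k e"
    by (rule kc1[OF f])
  show "\<And>i. mom r (S(v:=s1,v':=s2)) (j(v:=a1,v':=a2)) (k(v:=b1,v':=b2)) (v,i) = m4 s1 a1 b1 i"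
    by (rule momv[OF f(2,1)])
  show "\<And>i. mom r (S(v:=s1,v':=s2)) (j(v:=a1,v':=a2)) (k(v:=b1,v':=b2)) (v',i) = m4 s2 a2 b2 i"
    by (rule momv'[OF f(3)])
  show "\<And>u. u \<in> pV M \<Longrightarrow> fst (pP M u) \<in> insert 0 (pV M)" by (rule ps_D(3)[OF ps])
  show "\<And>d e. d \<in> pD M \<Longrightarrow> e \<in> d \<Longrightarrow> fst e \<in> insert 0 (pV M)" by (rule ps_D(4)[OF ps])
  show "\<And>u. u \<in> pV M \<Longrightarrow> mom r S j k (u,1) = mom r S j k (pP M u)" by (rule kc2(1)[OF pa])
  show "\<And>d e e'. d \<in> pD M \<Longrightarrow> e \<in> d \<Longrightarrow> e' \<in> d \<Longrightarrow> mom r S j k e = mom r S j k e'"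
    by (rule kc2(2)[OF pa])
  show "\<And>u. u \<in> pV M \<Longrightarrow> u \<noteq> v \<and> u \<noteq> v'" using f(4,5) by blast
  show "v \<noteq> v'" by (rule f(1))
  show "\<And>u. j u \<le> S u" "\<And>u. k u \<le> S u" using padm_D(2)[OF pa] by auto
qed

lemma key_I:
  assumes ps: "pstruct M" and fr: "fresh2 M v v'" and xy: "{x,y} \<in> pD M" and c: "c \<in> {3,4}"
    and pa: "padm M r (S,j,k)" and s: "s = mom r S j k x + a + b" and jk: "j' \<le> s" "k' \<le> s"
    and J: "\<forall>(i,i')\<in>set [(2,2),(3,c),(4,7-c)]. m4 s j' k' i' = m4 s (mom r S j k x) b i"
  shows "pdok \<lparr>pV = pV M \<union> {v,v'}, pP = (pP M)(v := x, v' := y),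
      pD = (pD M - {{x,y}}) \<union> {{(v,2),(v',2)}, {(v,3),(v',c)}, {(v,4),(v',7-c)}}, pW = W\<rparr>
      r (S(v:=s,v':=s)) (j(v:=mom r S j k x, v':=j')) (k(v:=b,v':=k'))"
proof -
  note K = key_common[OF ps fr pa]
  define m where "m = mom r S j k x"
  let ?mom = "mom r (S(v:=s,v':=s)) (j(v:=m, v':=j')) (k(v:=b,v':=k'))"
  have fx: "fst x \<in> insert 0 (pV M)" "fst y \<in> insert 0 (pV M)" using K(5)[OF xy] by auto
  have my: "mom r S j k y = m" using K(7)[OF xy] m_def by auto
  have J2: "m4 s j' k' 2 = m4 s m b 2" and Jc: "m4 s j' k' c = m4 s m b 3"
    and J7: "m4 s j' k' (7-c) = m4 s m b 4" using J unfolding m_def by simp_all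
  have jm: "j' = m" using J2 jk s m_def by (simp add: m4_def)
  have par: "\<forall>u\<in>pV M \<union> {v,v'}. ?mom (u,1) = ?mom (((pP M)(v := x, v' := y)) u)"
  proof
    fix u assume "u \<in> pV M \<union> {v,v'}"
    then consider "u \<in> pV M" | "u = v" | "u = v'" by blast
    then show "?mom (u,1) = ?mom (((pP M)(v := x, v' := y)) u)"
    proof cases
      case 1
      then show ?thesis using K(1)[of "(u,1)"] K(1)[OF K(4)[OF 1]] K(6)[OF 1] K(8)[OF 1] by simp
    next
      case 2
      then show ?thesis using K(2) K(1)[OF fx(1)] K(9) by (simp add: m4_def m_def)
    next
      case 3
      then show ?thesis using K(3) K(1)[OF fx(2)] my jm by (simp add: m4_def)
    qed
  qed
  have dsh: "\<forall>d\<in>(pD M - {{x,y}}) \<union> {{(v,2),(v',2)}, {(v,3),(v',c)}, {(v,4),(v',7-c)}}.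
      \<forall>e\<in>d. \<forall>e'\<in>d. ?mom e = ?mom e'"
  proof
    fix d assume "d \<in> (pD M - {{x,y}}) \<union> {{(v,2),(v',2)}, {(v,3),(v',c)}, {(v,4),(v',7-c)}}"
    then consider "d \<in> pD M" | "d = {(v,2),(v',2)}" | "d = {(v,3),(v',c)}" | "d = {(v,4),(v',7-c)}" by blast
    then show "\<forall>e\<in>d. \<forall>e'\<in>d. ?mom e = ?mom e'"
    proof cases
      case 1
      show ?thesis
      proof (intro ballI)
        fix e e' assume "e \<in> d" "e' \<in> d"
        then show "?mom e = ?mom e'"
          using K(1)[OF K(5)[OF 1 \<open>e\<in>d\<close>]] K(1)[OF K(5)[OF 1 \<open>e'\<in>d\<close>]] K(7)[OF 1 \<open>e\<in>d\<close> \<open>e'\<in>d\<close>]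
          by simp
      qed
    next
      case 2 show ?thesis unfolding 2 by (rule pair_const) (simp only: K(2,3) J2)
    next
      case 3 show ?thesis unfolding 3 by (rule pair_const) (simp only: K(2,3) Jc)
    next
      case 4 show ?thesis unfolding 4 by (rule pair_const) (simp only: K(2,3) J7)
    qed
  qed
  show ?thesis unfolding pdok_def pre.select_convs m_def[symmetric] using par dsh by (intro conjI) assumption+
qed

lemma key_II:
  assumes ps: "pstruct M" and fr: "fresh2 M v v'" and xy: "{z,z'} \<in> pD M" and c: "c \<in> {3,4}"
    and pa: "padm M r (S,j,k)" and s: "s = mom r S j k z + a + b" and jk: "j' \<le> s" "k' \<le> s"
    and J: "\<forall>(i,i')\<in>set [(2,1),(3,c),(4,7-c)]. m4 s j' k' i' = m4 s (mom r S j k z) b i"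
  shows "pdok \<lparr>pV = pV M \<union> {v,v'}, pP = (pP M)(v := z, v' := (v,2)),
      pD = (pD M - {{z,z'}}) \<union> {{(v',2), z'}, {(v,3),(v',c)}, {(v,4),(v',7-c)}}, pW = W\<rparr>
      r (S(v:=s,v':=s)) (j(v:=mom r S j k z, v':=j')) (k(v:=b,v':=k'))"
proof -
  note K = key_common[OF ps fr pa]
  define m where "m = mom r S j k z"
  let ?mom = "mom r (S(v:=s,v':=s)) (j(v:=m, v':=j')) (k(v:=b,v':=k'))"
  have fx: "fst z \<in> insert 0 (pV M)" "fst z' \<in> insert 0 (pV M)" using K(5)[OF xy] by auto
  have my: "mom r S j k z' = m" using K(7)[OF xy] m_def by auto
  have J1: "m4 s j' k' 1 = m4 s m b 2" and Jc: "m4 s j' k' c = m4 s m b 3"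
    and J7: "m4 s j' k' (7-c) = m4 s m b 4" using J unfolding m_def by simp_all
  have jm: "j' = s - m" using J1 jk s m_def by (simp add: m4_def)
  have ms: "m \<le> s" using s m_def by simp
  have par: "\<forall>u\<in>pV M \<union> {v,v'}. ?mom (u,1) = ?mom (((pP M)(v := z, v' := (v,2))) u)"
  proof
    fix u assume "u \<in> pV M \<union> {v,v'}"
    then consider "u \<in> pV M" | "u = v" | "u = v'" by blast
    then show "?mom (u,1) = ?mom (((pP M)(v := z, v' := (v,2))) u)"
    proof cases
      case 1
      then show ?thesis using K(1)[of "(u,1)"] K(1)[OF K(4)[OF 1]] K(6)[OF 1] K(8)[OF 1] by simp
    next
      case 2
      then show ?thesis using K(2) K(1)[OF fx(1)] K(9) by (simp add: m4_def m_def)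
    next
      case 3
      then show ?thesis using K(3) K(2) J1 by simp
    qed
  qed
  have dsh: "\<forall>d\<in>(pD M - {{z,z'}}) \<union> {{(v',2), z'}, {(v,3),(v',c)}, {(v,4),(v',7-c)}}.
      \<forall>e\<in>d. \<forall>e'\<in>d. ?mom e = ?mom e'"
  proof
    fix d assume "d \<in> (pD M - {{z,z'}}) \<union> {{(v',2), z'}, {(v,3),(v',c)}, {(v,4),(v',7-c)}}"
    then consider "d \<in> pD M" | "d = {(v',2), z'}" | "d = {(v,3),(v',c)}" | "d = {(v,4),(v',7-c)}" by blast
    then show "\<forall>e\<in>d. \<forall>e'\<in>d. ?mom e = ?mom e'"
    proof cases
      case 1
      show ?thesis
      proof (intro ballI)
        fix e e' assume "e \<in> d" "e' \<in> d"
        then show "?mom e = ?mom e'"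
          using K(1)[OF K(5)[OF 1 \<open>e\<in>d\<close>]] K(1)[OF K(5)[OF 1 \<open>e'\<in>d\<close>]] K(7)[OF 1 \<open>e\<in>d\<close> \<open>e'\<in>d\<close>]
          by simp
      qed
    next
      case 2
      have "?mom (v',2) = m" using K(3) jm ms by (simp add: m4_def)
      moreover have "?mom z' = m" using K(1)[OF fx(2)] my by simp
      ultimately show ?thesis unfolding 2 by (intro pair_const) simp
    next
      case 3 show ?thesis unfolding 3 by (rule pair_const) (simp only: K(2,3) Jc)
    next
      case 4 show ?thesis unfolding 4 by (rule pair_const) (simp only: K(2,3) J7)
    qed
  qed
  show ?thesis unfolding pdok_def pre.select_convs m_def[symmetric] using par dsh by (intro conjI) assumption+
qed

lemma key_III:
  assumes ps: "pstruct M" and fr: "fresh2 M v v'" and xy: "{z,z'} \<in> pD M" and c: "c \<in> {3,4}" and a0: "a0 \<in> {3,4}"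
    and pa: "padm M r (S,j,k)" and s: "s = mom r S j k z + a + b" and jk: "j' \<le> s" "k' \<le> s"
    and J: "\<forall>(i,i')\<in>set [(a0,1),(2,c),(7-a0,2)]. m4 s j' k' i' = m4 s (mom r S j k z) b i"
  shows "pdok \<lparr>pV = pV M \<union> {v,v'}, pP = (pP M)(v := z, v' := (v,a0)),
      pD = (pD M - {{z,z'}}) \<union> {{(v,2),(v',c)}, {(v,7-a0),(v',2)}, {(v',7-c), z'}}, pW = W\<rparr>
      r (S(v:=s,v':=s)) (j(v:=mom r S j k z, v':=j')) (k(v:=b,v':=k'))"
proof -
  note K = key_common[OF ps fr pa]
  define m where "m = mom r S j k z"
  let ?mom = "mom r (S(v:=s,v':=s)) (j(v:=m, v':=j')) (k(v:=b,v':=k'))"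
  have fx: "fst z \<in> insert 0 (pV M)" "fst z' \<in> insert 0 (pV M)" using K(5)[OF xy] by auto
  have my: "mom r S j k z' = m" using K(7)[OF xy] m_def by auto
  have Ja: "m4 s j' k' 1 = m4 s m b a0" and Jc: "m4 s j' k' c = m4 s m b 2"
    and J2: "m4 s j' k' 2 = m4 s m b (7-a0)" using J unfolding m_def by simp_all
  have ms: "m \<le> s" using s m_def by simp
  have J7: "m4 s j' k' (7-c) = m" using Jc c jk ms by (auto simp: m4_def)
  have par: "\<forall>u\<in>pV M \<union> {v,v'}. ?mom (u,1) = ?mom (((pP M)(v := z, v' := (v,a0))) u)"
  proof
    fix u assume "u \<in> pV M \<union> {v,v'}"
    then consider "u \<in> pV M" | "u = v" | "u = v'" by blast
    then show "?mom (u,1) = ?mom (((pP M)(v := z, v' := (v,a0))) u)"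
    proof cases
      case 1
      then show ?thesis using K(1)[of "(u,1)"] K(1)[OF K(4)[OF 1]] K(6)[OF 1] K(8)[OF 1] by simp
    next
      case 2
      then show ?thesis using K(2) K(1)[OF fx(1)] K(9) by (simp add: m4_def m_def)
    next
      case 3
      then show ?thesis using K(3) K(2) Ja by simp
    qed
  qed
  have dsh: "\<forall>d\<in>(pD M - {{z,z'}}) \<union> {{(v,2),(v',c)}, {(v,7-a0),(v',2)}, {(v',7-c), z'}}.
      \<forall>e\<in>d. \<forall>e'\<in>d. ?mom e = ?mom e'"
  proof
    fix d assume "d \<in> (pD M - {{z,z'}}) \<union> {{(v,2),(v',c)}, {(v,7-a0),(v',2)}, {(v',7-c), z'}}"
    then consider "d \<in> pD M" | "d = {(v,2),(v',c)}" | "d = {(v,7-a0),(v',2)}" | "d = {(v',7-c), z'}" by blast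
    then show "\<forall>e\<in>d. \<forall>e'\<in>d. ?mom e = ?mom e'"
    proof cases
      case 1
      show ?thesis
      proof (intro ballI)
        fix e e' assume "e \<in> d" "e' \<in> d"
        then show "?mom e = ?mom e'"
          using K(1)[OF K(5)[OF 1 \<open>e\<in>d\<close>]] K(1)[OF K(5)[OF 1 \<open>e'\<in>d\<close>]] K(7)[OF 1 \<open>e\<in>d\<close> \<open>e'\<in>d\<close>]
          by simp
      qed
    next
      case 2 show ?thesis unfolding 2 by (rule pair_const) (simp only: K(2,3) Jc)
    next
      case 3 show ?thesis unfolding 3 by (rule pair_const) (simp only: K(2,3) J2)
    next
      case 4
      have "?mom (v',7-c) = m" using K(3) J7 by simp
      moreover have "?mom z' = m" using K(1)[OF fx(2)] my by simp
      ultimately show ?thesis unfolding 4 by (intro pair_const) simp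
    qed
  qed
  show ?thesis unfolding pdok_def pre.select_convs m_def[symmetric] using par dsh by (intro conjI) assumption+
qed

lemma key_IIs:
  assumes ps: "pstruct M" and fr: "fresh2 M v v'" and zV: "z \<in> pV M" and c: "c \<in> {3,4}"
    and pa: "padm M r (S,j,k)" and s: "s = mom r S j k (pP M z) + a + b" and jk: "j' \<le> s" "k' \<le> s"
    and J: "\<forall>(i,i')\<in>set [(2,1),(3,c),(4,7-c)]. m4 s j' k' i' = m4 s (mom r S j k (pP M z)) b i"
  shows "pdok \<lparr>pV = pV M \<union> {v,v'}, pP = (pP M)(v := pP M z, v' := (v,2), z := (v',2)),
      pD = pD M \<union> {{(v,3),(v',c)}, {(v,4),(v',7-c)}}, pW = W\<rparr>
      r (S(v:=s,v':=s)) (j(v:=mom r S j k (pP M z), v':=j')) (k(v:=b,v':=k'))"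
proof -
  note K = key_common[OF ps fr pa]
  define m where "m = mom r S j k (pP M z)"
  let ?mom = "mom r (S(v:=s,v':=s)) (j(v:=m, v':=j')) (k(v:=b,v':=k'))"
  have fx: "fst (pP M z) \<in> insert 0 (pV M)" using K(4)[OF zV] by auto
  have mz: "mom r S j k (z,1) = m" using K(6)[OF zV] m_def by auto
  have J1: "m4 s j' k' 1 = m4 s m b 2" and Jc: "m4 s j' k' c = m4 s m b 3"
    and J7: "m4 s j' k' (7-c) = m4 s m b 4" using J unfolding m_def by simp_all
  have jm: "j' = s - m" using J1 jk s m_def by (simp add: m4_def)
  have ms: "m \<le> s" using s m_def by simp
  have zz: "z \<noteq> v" "z \<noteq> v'" using K(8)[OF zV] by auto
  have par: "\<forall>u\<in>pV M \<union> {v,v'}. ?mom (u,1) = ?mom (((pP M)(v := pP M z, v' := (v,2), z := (v',2))) u)"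
  proof
    fix u assume "u \<in> pV M \<union> {v,v'}"
    then consider "u \<in> pV M" "u \<noteq> z" | "u = z" | "u = v" | "u = v'" by blast
    then show "?mom (u,1) = ?mom (((pP M)(v := pP M z, v' := (v,2), z := (v',2))) u)"
    proof cases
      case 1
      then show ?thesis using K(1)[of "(u,1)"] K(1)[OF K(4)[OF 1(1)]] K(6)[OF 1(1)] K(8)[OF 1(1)] by simp
    next
      case 2
      have "?mom (z,1) = m" using K(1)[of "(z,1)"] zV mz by simp
      moreover have "?mom (v',2) = m" using K(3) jm ms by (simp add: m4_def)
      ultimately show ?thesis using 2 by simp
    next
      case 3
      then show ?thesis using K(2) K(1)[OF fx(1)] K(9) zz by (simp add: m4_def m_def)
    next
      case 4
      then show ?thesis using K(3) K(2) J1 zz by simp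
    qed
  qed
  have dsh: "\<forall>d\<in>pD M \<union> {{(v,3),(v',c)}, {(v,4),(v',7-c)}}.
      \<forall>e\<in>d. \<forall>e'\<in>d. ?mom e = ?mom e'"
  proof
    fix d assume "d \<in> pD M \<union> {{(v,3),(v',c)}, {(v,4),(v',7-c)}}"
    then consider "d \<in> pD M" | "d = {(v,3),(v',c)}" | "d = {(v,4),(v',7-c)}" by blast
    then show "\<forall>e\<in>d. \<forall>e'\<in>d. ?mom e = ?mom e'"
    proof cases
      case 1
      show ?thesis
      proof (intro ballI)
        fix e e' assume "e \<in> d" "e' \<in> d"
        then show "?mom e = ?mom e'"
          using K(1)[OF K(5)[OF 1 \<open>e\<in>d\<close>]] K(1)[OF K(5)[OF 1 \<open>e'\<in>d\<close>]] K(7)[OF 1 \<open>e\<in>d\<close> \<open>e'\<in>d\<close>]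
          by simp
      qed
    next
      case 2 show ?thesis unfolding 2 by (rule pair_const) (simp only: K(2,3) Jc)
    next
      case 3 show ?thesis unfolding 3 by (rule pair_const) (simp only: K(2,3) J7)
    qed
  qed
  show ?thesis unfolding pdok_def pre.select_convs m_def[symmetric] using par dsh by (intro conjI) assumption+
qed

lemma key_IIIs:
  assumes ps: "pstruct M" and fr: "fresh2 M v v'" and zV: "z \<in> pV M" and c: "c \<in> {3,4}" and a0: "a0 \<in> {3,4}"
    and pa: "padm M r (S,j,k)" and s: "s = mom r S j k (pP M z) + a + b" and jk: "j' \<le> s" "k' \<le> s"
    and J: "\<forall>(i,i')\<in>set [(a0,1),(2,7-c),(7-a0,2)]. m4 s j' k' i' = m4 s (mom r S j k (pP M z)) b i"
  shows "pdok \<lparr>pV = pV M \<union> {v,v'}, pP = (pP M)(v := pP M z, v' := (v,a0), z := (v',c)),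
      pD = pD M \<union> {{(v,2),(v',7-c)}, {(v,7-a0),(v',2)}}, pW = W\<rparr>
      r (S(v:=s,v':=s)) (j(v:=mom r S j k (pP M z), v':=j')) (k(v:=b,v':=k'))"
proof -
  note K = key_common[OF ps fr pa]
  define m where "m = mom r S j k (pP M z)"
  let ?mom = "mom r (S(v:=s,v':=s)) (j(v:=m, v':=j')) (k(v:=b,v':=k'))"
  have fx: "fst (pP M z) \<in> insert 0 (pV M)" using K(4)[OF zV] by auto
  have mz: "mom r S j k (z,1) = m" using K(6)[OF zV] m_def by auto
  have Ja: "m4 s j' k' 1 = m4 s m b a0" and Jc: "m4 s j' k' (7-c) = m4 s m b 2"
    and J2: "m4 s j' k' 2 = m4 s m b (7-a0)" using J unfolding m_def by simp_all
  have ms: "m \<le> s" using s m_def by simp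
  have Jz: "m4 s j' k' c = m" using Jc c jk ms by (auto simp: m4_def)
  have zz: "z \<noteq> v" "z \<noteq> v'" using K(8)[OF zV] by auto
  have par: "\<forall>u\<in>pV M \<union> {v,v'}. ?mom (u,1) = ?mom (((pP M)(v := pP M z, v' := (v,a0), z := (v',c))) u)"
  proof
    fix u assume "u \<in> pV M \<union> {v,v'}"
    then consider "u \<in> pV M" "u \<noteq> z" | "u = z" | "u = v" | "u = v'" by blast
    then show "?mom (u,1) = ?mom (((pP M)(v := pP M z, v' := (v,a0), z := (v',c))) u)"
    proof cases
      case 1
      then show ?thesis using K(1)[of "(u,1)"] K(1)[OF K(4)[OF 1(1)]] K(6)[OF 1(1)] K(8)[OF 1(1)] by simp
    next
      case 2
      have "?mom (z,1) = m" using K(1)[of "(z,1)"] zV mz by simp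
      moreover have "?mom (v',c) = m" using K(3) Jz by simp
      ultimately show ?thesis using 2 by simp
    next
      case 3
      then show ?thesis using K(2) K(1)[OF fx(1)] K(9) zz by (simp add: m4_def m_def)
    next
      case 4
      then show ?thesis using K(3) K(2) Ja zz by simp
    qed
  qed
  have dsh: "\<forall>d\<in>pD M \<union> {{(v,2),(v',7-c)}, {(v,7-a0),(v',2)}}.
      \<forall>e\<in>d. \<forall>e'\<in>d. ?mom e = ?mom e'"
  proof
    fix d assume "d \<in> pD M \<union> {{(v,2),(v',7-c)}, {(v,7-a0),(v',2)}}"
    then consider "d \<in> pD M" | "d = {(v,2),(v',7-c)}" | "d = {(v,7-a0),(v',2)}" by blast
    then show "\<forall>e\<in>d. \<forall>e'\<in>d. ?mom e = ?mom e'"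
    proof cases
      case 1
      show ?thesis
      proof (intro ballI)
        fix e e' assume "e \<in> d" "e' \<in> d"
        then show "?mom e = ?mom e'"
          using K(1)[OF K(5)[OF 1 \<open>e\<in>d\<close>]] K(1)[OF K(5)[OF 1 \<open>e'\<in>d\<close>]] K(7)[OF 1 \<open>e\<in>d\<close> \<open>e'\<in>d\<close>]
          by simp
      qed
    next
      case 2 show ?thesis unfolding 2 by (rule pair_const) (simp only: K(2,3) Jc)
    next
      case 3 show ?thesis unfolding 3 by (rule pair_const) (simp only: K(2,3) J2)
    qed
  qed
  show ?thesis unfolding pdok_def pre.select_convs m_def[symmetric] using par dsh by (intro conjI) assumption+
qed

lemma lw_D: "leading_wavy v v' J wt \<Longrightarrow> \<exists>t. wt = (v,v',t) \<or> wt = (v',v,t)"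
  unfolding leading_wavy_def by blast

lemma pstruct_step:
  assumes ps: "pstruct M" and fr: "fresh2 M v v'" and lw: "leading_wavy v v' J wt"
    and P: "\<forall>u\<in>pV M \<union> {v,v'}. fst (P' u) \<in> insert 0 (pV M \<union> {v,v'})"
    and D: "\<forall>d\<in>D'. \<forall>e\<in>d. fst e \<in> insert 0 (pV M \<union> {v,v'})"
  shows "pstruct \<lparr>pV = pV M \<union> {v,v'}, pP = P', pD = D', pW = pW M \<union> {wt}\<rparr>"
proof -
  have "\<forall>(a, b, t)\<in>pW M \<union> {wt}. a \<in> pV M \<union> {v,v'} \<and> b \<in> pV M \<union> {v,v'}"
    using ps_D(5)[OF ps] lw_D[OF lw] by auto
  then show ?thesis unfolding pstruct_def pre.select_convs
    using ps_D(1,2)[OF ps] fr_D[OF fr] P D by auto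
qed

lemma ins_sub: "a \<in> insert 0 V \<Longrightarrow> a \<in> insert 0 (V \<union> W)" by blast

lemma D_old: "pstruct M \<Longrightarrow> \<forall>d\<in>pD M - X. \<forall>e\<in>d. fst e \<in> insert 0 (pV M \<union> W)"
  using ps_D(4) by blast

lemma pstruct_mel: "M \<in> melonic_pre \<Longrightarrow> pstruct M"
proof (induction rule: melonic_pre.induct)
  case trivial
  then show ?case by (auto simp: pstruct_def)
next
  case (ins_I M v v' x y c wt)
  note ps = ps_D[OF ins_I.IH] and f = fr_D[OF ins_I.hyps(2)]
  have fx: "fst x \<in> insert 0 (pV M)" "fst y \<in> insert 0 (pV M)" using ps(4)[OF ins_I.hyps(3)] by auto
  have P: "\<forall>u\<in>pV M \<union> {v,v'}. fst (((pP M)(v := x, v' := y)) u) \<in> insert 0 (pV M \<union> {v,v'})"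
  proof
    fix u assume u: "u \<in> pV M \<union> {v,v'}"
    show "fst (((pP M)(v := x, v' := y)) u) \<in> insert 0 (pV M \<union> {v,v'})"
      using u f fx ps(3)[of u] by (cases "u = v"; cases "u = v'") (auto intro: ins_sub)
  qed
  have D: "\<forall>d\<in>(pD M - {{x,y}}) \<union> {{(v,2),(v',2)}, {(v,3),(v',c)}, {(v,4),(v',7-c)}}.
     \<forall>e\<in>d. fst e \<in> insert 0 (pV M \<union> {v,v'})"
    using D_old[OF ins_I.IH, of "{{x,y}}" "{v,v'}"] by auto
  show ?case by (rule pstruct_step[OF ins_I.IH ins_I.hyps(2,6) P D])
next
  case (ins_II M v v' z z' c wt)
  note ps = ps_D[OF ins_II.IH] and f = fr_D[OF ins_II.hyps(2)]
  have fx: "fst z \<in> insert 0 (pV M)" "fst z' \<in> insert 0 (pV M)" using ps(4)[OF ins_II.hyps(3)] by auto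
  have P: "\<forall>u\<in>pV M \<union> {v,v'}. fst (((pP M)(v := z, v' := (v,2))) u) \<in> insert 0 (pV M \<union> {v,v'})"
  proof
    fix u assume u: "u \<in> pV M \<union> {v,v'}"
    show "fst (((pP M)(v := z, v' := (v,2))) u) \<in> insert 0 (pV M \<union> {v,v'})"
      using u f fx ps(3)[of u] by (cases "u = v"; cases "u = v'") (auto intro: ins_sub)
  qed
  have D: "\<forall>d\<in>(pD M - {{z,z'}}) \<union> {{(v',2), z'}, {(v,3),(v',c)}, {(v,4),(v',7-c)}}.
     \<forall>e\<in>d. fst e \<in> insert 0 (pV M \<union> {v,v'})"
    using D_old[OF ins_II.IH, of "{{z,z'}}" "{v,v'}"] fx by auto
  show ?case by (rule pstruct_step[OF ins_II.IH ins_II.hyps(2,6) P D])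
next
  case (ins_III M v v' z z' a c wt)
  note ps = ps_D[OF ins_III.IH] and f = fr_D[OF ins_III.hyps(2)]
  have fx: "fst z \<in> insert 0 (pV M)" "fst z' \<in> insert 0 (pV M)" using ps(4)[OF ins_III.hyps(3)] by auto
  have P: "\<forall>u\<in>pV M \<union> {v,v'}. fst (((pP M)(v := z, v' := (v,a))) u) \<in> insert 0 (pV M \<union> {v,v'})"
  proof
    fix u assume u: "u \<in> pV M \<union> {v,v'}"
    show "fst (((pP M)(v := z, v' := (v,a))) u) \<in> insert 0 (pV M \<union> {v,v'})"
      using u f fx ps(3)[of u] by (cases "u = v"; cases "u = v'") (auto intro: ins_sub)
  qed
  have D: "\<forall>d\<in>(pD M - {{z,z'}}) \<union> {{(v,2),(v',c)}, {(v,7-a),(v',2)}, {(v',7-c), z'}}.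
     \<forall>e\<in>d. fst e \<in> insert 0 (pV M \<union> {v,v'})"
    using D_old[OF ins_III.IH, of "{{z,z'}}" "{v,v'}"] fx by auto
  show ?case by (rule pstruct_step[OF ins_III.IH ins_III.hyps(2,7) P D])
next
  case (ins_IIs M v v' z c wt)
  note ps = ps_D[OF ins_IIs.IH] and f = fr_D[OF ins_IIs.hyps(2)]
  have fx: "fst (pP M z) \<in> insert 0 (pV M)" using ps(3)[OF ins_IIs.hyps(3)] by auto
  have P: "\<forall>u\<in>pV M \<union> {v,v'}. fst (((pP M)(v := pP M z, v' := (v,2), z := (v',2))) u) \<in> insert 0 (pV M \<union> {v,v'})"
  proof
    fix u assume u: "u \<in> pV M \<union> {v,v'}"
    show "fst (((pP M)(v := pP M z, v' := (v,2), z := (v',2))) u) \<in> insert 0 (pV M \<union> {v,v'})"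
      using u f fx ps(3)[of u] by (cases "u = v"; cases "u = v'"; cases "u = z") (auto intro: ins_sub)
  qed
  have D: "\<forall>d\<in>pD M \<union> {{(v,3),(v',c)}, {(v,4),(v',7-c)}}.
     \<forall>e\<in>d. fst e \<in> insert 0 (pV M \<union> {v,v'})"
    using D_old[OF ins_IIs.IH, of "{}" "{v,v'}"] by auto
  show ?case by (rule pstruct_step[OF ins_IIs.IH ins_IIs.hyps(2,5) P D])
next
  case (ins_IIIs M v v' z a c wt)
  note ps = ps_D[OF ins_IIIs.IH] and f = fr_D[OF ins_IIIs.hyps(2)]
  have fx: "fst (pP M z) \<in> insert 0 (pV M)" using ps(3)[OF ins_IIIs.hyps(3)] by auto
  have P: "\<forall>u\<in>pV M \<union> {v,v'}. fst (((pP M)(v := pP M z, v' := (v,a), z := (v',c))) u) \<in> insert 0 (pV M \<union> {v,v'})"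
  proof
    fix u assume u: "u \<in> pV M \<union> {v,v'}"
    show "fst (((pP M)(v := pP M z, v' := (v,a), z := (v',c))) u) \<in> insert 0 (pV M \<union> {v,v'})"
      using u f fx ps(3)[of u] by (cases "u = v"; cases "u = v'"; cases "u = z") (auto intro: ins_sub)
  qed
  have D: "\<forall>d\<in>pD M \<union> {{(v,2),(v',7-c)}, {(v,7-a),(v',2)}}.
     \<forall>e\<in>d. fst e \<in> insert 0 (pV M \<union> {v,v'})"
    using D_old[OF ins_IIIs.IH, of "{}" "{v,v'}"] by auto
  show ?case by (rule pstruct_step[OF ins_IIIs.IH ins_IIIs.hyps(2,6) P D])
qed

lemma fam_mel: "M \<in> melonic_pre \<Longrightarrow> \<exists>F. fam M r F"
proof (induction rule: melonic_pre.induct)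
  case trivial
  let ?F = "\<lambda>xs::nat list. ((\<lambda>_::nat. 0::nat), (\<lambda>_::nat. 0::nat), (\<lambda>_::nat. 0::nat))"
  have "fam \<lparr>pV = {}, pP = (\<lambda>_. (0, 0)), pD = {{(0,1), (0,2)}}, pW = {}\<rparr> r ?F"
    unfolding fam_def padm_def pdok_def by (auto simp: mom_def inj_on_def)
  then show ?case by blast
next
  case (ins_I M v v' x y c wt)
  from ins_I.IH obtain F where F: "fam M r F" by blast
  have ps: "pstruct M" by (rule pstruct_mel[OF ins_I.hyps(1)])
  show ?case
    apply (rule step[where ez = x, OF ps F ins_I.hyps(2) _ ins_I.hyps(6)])
    using ps_D(4)[OF ps ins_I.hyps(3)] apply simp
    apply simp
    using ins_I.hyps(5) apply auto[1]
    apply simp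
    apply simp
    apply (rule key_I[OF ps ins_I.hyps(2,3,5) _ refl]; assumption)
    done
next
  case (ins_II M v v' z z' c wt)
  from ins_II.IH obtain F where F: "fam M r F" by blast
  have ps: "pstruct M" by (rule pstruct_mel[OF ins_II.hyps(1)])
  show ?case
    apply (rule step[where ez = z, OF ps F ins_II.hyps(2) _ ins_II.hyps(6)])
    using ps_D(4)[OF ps ins_II.hyps(3)] apply simp
    apply simp
    using ins_II.hyps(5) apply auto[1]
    apply simp
    apply simp
    apply (rule key_II[OF ps ins_II.hyps(2,3,5) _ refl]; assumption)
    done
next
  case (ins_III M v v' z z' a c wt)
  from ins_III.IH obtain F where F: "fam M r F" by blast
  have ps: "pstruct M" by (rule pstruct_mel[OF ins_III.hyps(1)])
  show ?case
    apply (rule step[where ez = z, OF ps F ins_III.hyps(2) _ ins_III.hyps(7)])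
    using ps_D(4)[OF ps ins_III.hyps(3)] apply simp
    apply simp
    using ins_III.hyps(5,6) apply auto[1]
    apply simp
    apply simp
    apply (rule key_III[OF ps ins_III.hyps(2,3,6,5) _ refl]; assumption)
    done
next
  case (ins_IIs M v v' z c wt)
  from ins_IIs.IH obtain F where F: "fam M r F" by blast
  have ps: "pstruct M" by (rule pstruct_mel[OF ins_IIs.hyps(1)])
  show ?case
    apply (rule step[where ez = "pP M z", OF ps F ins_IIs.hyps(2) _ ins_IIs.hyps(5)])
    using ps_D(3)[OF ps ins_IIs.hyps(3)] apply simp
    apply simp
    using ins_IIs.hyps(4) apply auto[1]
    apply simp
    apply simp
    apply (rule key_IIs[OF ps ins_IIs.hyps(2,3,4) _ refl]; assumption)
    done
next
  case (ins_IIIs M v v' z a c wt)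
  from ins_IIIs.IH obtain F where F: "fam M r F" by blast
  have ps: "pstruct M" by (rule pstruct_mel[OF ins_IIIs.hyps(1)])
  show ?case
    apply (rule step[where ez = "pP M z", OF ps F ins_IIIs.hyps(2) _ ins_IIIs.hyps(6)])
    using ps_D(3)[OF ps ins_IIIs.hyps(3)] apply simp
    apply simp
    using ins_IIIs.hyps(4,5) apply auto[1]
    apply simp
    apply simp
    apply (rule key_IIIs[OF ps ins_IIIs.hyps(2,3,5,4) _ refl]; assumption)
    done
qed

lemma ce_finite: "finite (child_ends n)"
proof -
  have "child_ends n \<subseteq> {0..n} \<times> {0..4}" unfolding child_ends_def by auto
  then show ?thesis by (rule finite_subset) simp
qed

lemma ce_card: "card (child_ends n) \<le> 3 * n + 2"
proof -
  have eq: "child_ends n = {(0,1),(0,2)} \<union> ({1..n} \<times> {2,3,4})" unfolding child_ends_def by auto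
  have "card (child_ends n) \<le> card {(0::nat,1::nat),(0,2)} + card ({1..n} \<times> {2::nat,3,4})"
    unfolding eq by (rule card_Un_le)
  also have "\<dots> \<le> 2 + 3 * n" by (simp add: card_cartesian_product card_insert_if)
  finally show ?thesis by simp
qed

lemma card_leaves:
  assumes g: "is_graph n G"
  shows "finite (leaves n G)" "card (leaves n G) \<le> n + 1"
proof -
  have P: "par G ` {1..n} \<subseteq> child_ends n" and inj: "inj_on (par G) {1..n}"
    and bij: "bij_betw (wd G) (leaves n G) (antileaves n G)"
    using g unfolding is_graph_def by auto
  have cP: "card (par G ` {1..n}) = n" using card_image[OF inj] by simp
  have fLE: "finite (leaf_ends n G)" unfolding leaf_ends_def using ce_finite by simp
  have cLE: "card (leaf_ends n G) \<le> 2 * n + 2"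
    unfolding leaf_ends_def using card_Diff_subset[OF finite_subset[OF P ce_finite] P] ce_card[of n] cP
    by simp
  have sub: "leaves n G \<union> antileaves n G \<subseteq> leaf_ends n G" "leaves n G \<inter> antileaves n G = {}"
    unfolding leaves_def antileaves_def by auto
  show fL: "finite (leaves n G)" using finite_subset[OF _ fLE] sub(1) by blast
  have fA: "finite (antileaves n G)" using finite_subset[OF _ fLE] sub(1) by blast
  have cA: "card (antileaves n G) = card (leaves n G)" using bij_betw_same_card[OF bij] by simp
  have "card (leaves n G) + card (antileaves n G) = card (leaves n G \<union> antileaves n G)"
    using card_Un_disjoint[OF fL fA sub(2)] by simp
  also have "\<dots> \<le> card (leaf_ends n G)" by (rule card_mono[OF fLE sub(1)])
  finally show "card (leaves n G) \<le> n + 1" using cA cLE by simp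
qed

lemma weight_bound:
  fixes p :: real
  assumes "finite L" "card L \<le> N" "0 \<le> p" "p \<le> 1" "\<forall>x\<in>L. f x \<le> B"
  shows "(p ^ B) ^ N \<le> (\<Prod>x\<in>L. p ^ f x)"
proof -
  have "(p ^ B) ^ N \<le> (p ^ B) ^ card L"
    by (rule power_decreasing) (use assms in \<open>auto intro: power_le_one\<close>)
  also have "\<dots> = (\<Prod>x\<in>L. p ^ B)" by simp
  also have "\<dots> \<le> (\<Prod>x\<in>L. p ^ f x)"
    by (rule prod_mono) (use assms in \<open>auto intro: power_decreasing\<close>)
  finally show ?thesis .
qed

definition Bset :: "nat \<Rightarrow> nat \<Rightarrow> nat list set" where
  "Bset K n = {xs. length xs = n \<and> set xs \<subseteq> {..<K}}"

lemma Bset_finite: "finite (Bset K n)"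
  unfolding Bset_def using finite_lists_length_eq[of "{..<K}" n] by (simp add: conj_commute)

lemma Bset_Suc: "Bset K (Suc n) = (\<lambda>(a, xs). a # xs) ` ({..<K} \<times> Bset K n)"
  unfolding Bset_def by (auto simp: length_Suc_conv image_iff)

lemma Bset_sum:
  fixes q :: real
  shows "(\<Sum>xs\<in>Bset K n. q ^ sum_list xs) = (\<Sum>a<K. q ^ a) ^ n"
proof (induction n)
  case 0
  have "Bset K 0 = {[]}" unfolding Bset_def by auto
  then show ?case by simp
next
  case (Suc n)
  have inj: "inj_on (\<lambda>(a, xs). a # xs) ({..<K} \<times> Bset K n)" by (auto simp: inj_on_def)
  have "(\<Sum>xs\<in>Bset K (Suc n). q ^ sum_list xs) = (\<Sum>(a, xs)\<in>{..<K} \<times> Bset K n. q ^ a * q ^ sum_list xs)"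
    unfolding Bset_Suc by (subst sum.reindex[OF inj]) (simp add: split_def power_add)
  also have "\<dots> = (\<Sum>a<K. \<Sum>xs\<in>Bset K n. q ^ a * q ^ sum_list xs)"
    by (rule sum.cartesian_product[symmetric])
  also have "\<dots> = (\<Sum>a<K. q ^ a) * (\<Sum>xs\<in>Bset K n. q ^ sum_list xs)"
    by (rule sum_product[symmetric])
  finally show ?case using Suc by simp
qed

lemma one_minus_pow_le:
  fixes p :: real
  assumes "0 \<le> p" "p \<le> 1"
  shows "1 - p ^ m \<le> real m * (1 - p)"
proof -
  have "(\<Sum>i<m. p ^ i) \<le> (\<Sum>i<m. 1)" by (rule sum_mono) (use assms in \<open>auto intro: power_le_one\<close>)
  then have "(1 - p) * (\<Sum>i<m. p ^ i) \<le> (1 - p) * real m" using assms by (intro mult_left_mono) auto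
  then show ?thesis by (simp add: one_diff_power_eq mult.commute)
qed

definition TS :: "nat \<Rightarrow> (nat \<Rightarrow> nat) \<Rightarrow> (nat \<Rightarrow> nat) \<Rightarrow> nat \<Rightarrow> nat" where
  "TS n \<tau> S = (\<lambda>u. if u \<in> {1..n} then S (\<tau> u) else 0)"

lemma real_final:
  fixes p :: real
  assumes p: "0 < p" "p < 1"
  shows "p ^ ((2 * n + 1) * r) / (2 * real n + 1) ^ n \<le>
     1 / (1 / (1 - p)) ^ n * p ^ ((n + 1) * r) * (1 / (1 - p ^ (n + 1))) ^ n"
proof -
  have q1: "p ^ (n+1) < 1" using power_strict_decreasing[of 0 "n+1" p] p by simp
  have q0: "0 < 1 - p ^ (n+1)" using q1 by simp
  have le1: "1 - p ^ (n+1) \<le> real (n+1) * (1 - p)" by (rule one_minus_pow_le) (use p in auto)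
  have le2: "1 - p ^ (n+1) \<le> (2 * real n + 1) * (1 - p)"
  proof -
    have "real (n+1) * (1 - p) \<le> (2 * real n + 1) * (1 - p)"
      by (rule mult_right_mono) (use p in auto)
    then show ?thesis using le1 by linarith
  qed
  have r1: "1 / (2 * real n + 1) \<le> (1 - p) / (1 - p ^ (n+1))"
  proof -
    have "(1 - p) / ((2 * real n + 1) * (1 - p)) \<le> (1 - p) / (1 - p ^ (n+1))"
      by (rule divide_left_mono[OF le2]) (use p q0 in auto)
    moreover have "(1 - p) / ((2 * real n + 1) * (1 - p)) = 1 / (2 * real n + 1)"
      using p by simp
    ultimately show ?thesis by simp
  qed
  have r2: "(1 / (2 * real n + 1)) ^ n \<le> ((1 - p) / (1 - p ^ (n+1))) ^ n"
    by (rule power_mono[OF r1]) simp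
  have r3: "p ^ ((2 * n + 1) * r) \<le> p ^ ((n + 1) * r)"
    by (rule power_decreasing) (use p in auto)
  have "p ^ ((2 * n + 1) * r) / (2 * real n + 1) ^ n = p ^ ((2 * n + 1) * r) * (1 / (2 * real n + 1)) ^ n"
    by (simp add: power_one_over)
  also have "\<dots> \<le> p ^ ((n + 1) * r) * ((1 - p) / (1 - p ^ (n+1))) ^ n"
    by (rule mult_mono[OF r3 r2]) (use p in auto)
  also have "\<dots> = 1 / (1 / (1 - p)) ^ n * p ^ ((n + 1) * r) * (1 / (1 - p ^ (n + 1))) ^ n"
    by (simp add: power_divide power_one_over)
  finally show ?thesis .
qed

theorem lemma7:
  fixes p :: real and r n :: nat and G :: graph
  assumes "0 < p" and "p < 1" and "even n"
    and "is_graph n G" and "melonic n G"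
  shows "ennreal (p ^ ((2 * n + 1) * r) / (2 * real n + 1) ^ n) \<le> amplitude p n r G"
proof -
  obtain M \<sigma> where H: "M \<in> melonic_pre \<and> \<sigma> 0 = 0 \<and> bij_betw \<sigma> (pV M) {1..n} \<and>
        (\<forall>v\<in>pV M. par G (\<sigma> v) = mape \<sigma> (pP M v)) \<and>
        dashed n G = (\<lambda>d. mape \<sigma> ` d) ` pD M \<and>
        wv G = (\<lambda>(a, b, t). (\<sigma> a, \<sigma> b, t)) ` pW M"
    using conjunct2[OF assms(5)[unfolded melonic_def]] by (elim exE) (rule that)
  note H1 = conjunct2[OF H]
  note H2 = conjunct2[OF H1]
  note H3 = conjunct2[OF H2]
  note H4 = conjunct2[OF H3]
  have M: "M \<in> melonic_pre" by (rule conjunct1[OF H])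
  have s0: "\<sigma> 0 = 0" by (rule conjunct1[OF H1])
  have bij: "bij_betw \<sigma> (pV M) {1..n}" by (rule conjunct1[OF H2])
  have parG: "\<forall>v\<in>pV M. par G (\<sigma> v) = mape \<sigma> (pP M v)" by (rule conjunct1[OF H3])
  have dG: "dashed n G = (\<lambda>d. mape \<sigma> ` d) ` pD M" by (rule conjunct1[OF H4])
  have wG: "wv G = (\<lambda>(a, b, t). (\<sigma> a, \<sigma> b, t)) ` pW M" by (rule conjunct2[OF H4])
  have ps: "pstruct M" by (rule pstruct_mel[OF M])
  obtain F where F: "fam M r F" using fam_mel[OF M] by blast
  have cV: "card (pV M) = n" using bij_betw_same_card[OF bij] by simp
  define \<tau> where "\<tau> = inv_into (pV M) \<sigma>"
  have st: "\<tau> u \<in> pV M \<and> \<sigma> (\<tau> u) = u" if "u \<in> {1..n}" for u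
    using bij that unfolding \<tau>_def bij_betw_def by (auto intro: inv_into_into f_inv_into_f)
  have ts: "\<tau> (\<sigma> w) = w \<and> \<sigma> w \<in> {1..n}" if "w \<in> pV M" for w
    using bij that unfolding \<tau>_def bij_betw_def by (auto intro: inv_into_f_f)
  have TSs: "TS n \<tau> S (\<sigma> w) = S w" if "w \<in> pV M" for S w
    using ts[OF that] by (simp add: TS_def)
  have momT: "mom r (TS n \<tau> S) (TS n \<tau> j) (TS n \<tau> k) (mape \<sigma> e) = mom r S j k e"
    if e: "fst e \<in> insert 0 (pV M)" for S j k e
  proof -
    obtain u i where ue: "e = (u, i)" by (cases e)
    show ?thesis
    proof (cases "u = 0")
      case True
      then show ?thesis using ue s0 by (simp add: mape_def mom_root)
    next
      case False
      then have u: "u \<in> pV M" using e ue by simp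
      have "\<sigma> u \<noteq> 0" using ts[OF u] by simp
      then show ?thesis using ue u False TSs[OF u] by (simp add: mape_def mom_nz)
    qed
  qed
  have TS_inj: "S1 = S2" if "\<forall>u. u \<notin> pV M \<longrightarrow> S1 u = 0" "\<forall>u. u \<notin> pV M \<longrightarrow> S2 u = 0"
    "TS n \<tau> S1 = TS n \<tau> S2" for S1 S2
  proof
    fix u show "S1 u = S2 u"
    proof (cases "u \<in> pV M")
      case True
      then show ?thesis using TSs[OF True, of S1] TSs[OF True, of S2] that(3) by metis
    next
      case False
      then show ?thesis using that(1,2) by simp
    qed
  qed
  have admT: "admissible n r G (TS n \<tau> S, TS n \<tau> j, TS n \<tau> k)" if pa: "padm M r (S, j, k)" for S j k
  proof -
    let ?m = "mom r (TS n \<tau> S) (TS n \<tau> j) (TS n \<tau> k)"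
    have c1: "\<forall>v. v \<notin> {1..n} \<longrightarrow> TS n \<tau> S v = 0 \<and> TS n \<tau> j v = 0 \<and> TS n \<tau> k v = 0"
      by (simp add: TS_def)
    have c2: "\<forall>v\<in>{1..n}. TS n \<tau> j v \<le> TS n \<tau> S v \<and> TS n \<tau> k v \<le> TS n \<tau> S v"
      using padm_D(2)[OF pa] by (simp add: TS_def)
    have c3: "\<forall>v\<in>{1..n}. ?m (v, 1) = ?m (par G v)"
    proof
      fix v assume v: "v \<in> {1..n}"
      define w where "w = \<tau> v"
      have w: "w \<in> pV M" "\<sigma> w = v" using st[OF v] w_def by auto
      have "?m (v, 1) = ?m (mape \<sigma> (w, 1))" using w by (simp add: mape_def)
      also have "\<dots> = mom r S j k (w, 1)" by (rule momT) (use w in simp)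
      also have "\<dots> = mom r S j k (pP M w)" by (rule kc2(1)[OF pa w(1)])
      also have "\<dots> = ?m (mape \<sigma> (pP M w))" by (rule momT[symmetric]) (rule ps_D(3)[OF ps w(1)])
      also have "\<dots> = ?m (par G v)" using bspec[OF parG w(1)] w(2) by simp
      finally show "?m (v, 1) = ?m (par G v)" .
    qed
    have c4: "\<forall>x\<in>leaves n G. ?m x = ?m (wd G x)"
    proof
      fix x assume x: "x \<in> leaves n G"
      have "{x, wd G x} \<in> dashed n G" unfolding dashed_def using x by blast
      then obtain d where d: "d \<in> pD M" "{x, wd G x} = mape \<sigma> ` d" using dG by auto
      obtain e1 e2 where e: "e1 \<in> d" "x = mape \<sigma> e1" "e2 \<in> d" "wd G x = mape \<sigma> e2"
        using d(2) by (metis imageE insertI1 insertI2 singletonI)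
      have "?m x = mom r S j k e1" using e momT ps_D(4)[OF ps d(1)] by simp
      also have "\<dots> = mom r S j k e2" by (rule kc2(2)[OF pa d(1) e(1,3)])
      also have "\<dots> = ?m (wd G x)" using e momT ps_D(4)[OF ps d(1)] by simp
      finally show "?m x = ?m (wd G x)" .
    qed
    have c5: "\<forall>(a, b, t)\<in>wv G. prop_ok t (TS n \<tau> S a, TS n \<tau> j a, TS n \<tau> k a) (TS n \<tau> S b, TS n \<tau> j b, TS n \<tau> k b)"
    proof
      fix y assume "y \<in> wv G"
      then obtain a b t where y: "y = (\<sigma> a, \<sigma> b, t)" and abt: "(a, b, t) \<in> pW M" using wG by auto
      have ab: "a \<in> pV M" "b \<in> pV M" using ps_D(5)[OF ps abt] by auto
      have "prop_ok t (S a, j a, k a) (S b, j b, k b)" using padm_D(4)[OF pa] abt by auto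
      then show "case y of (a, b, t) \<Rightarrow> prop_ok t (TS n \<tau> S a, TS n \<tau> j a, TS n \<tau> k a) (TS n \<tau> S b, TS n \<tau> j b, TS n \<tau> k b)"
        using y TSs[OF ab(1)] TSs[OF ab(2)] by simp
    qed
    show ?thesis unfolding admissible_def prod.case by (intro conjI; fact c1 c2 c3 c4 c5)
  qed
  define FG where "FG = (\<lambda>xs. case F xs of (S, j, k) \<Rightarrow> (TS n \<tau> S, TS n \<tau> j, TS n \<tau> k))"
  define wR where "wR = (\<lambda>A. case A of (S, j, k) \<Rightarrow> \<Prod>x\<in>leaves n G. p ^ mom r S j k x)"
  define q where "q = p ^ (n + 1)"
  have wR0: "0 \<le> wR A" for A unfolding wR_def using assms(1) by (cases A) (auto intro: prod_nonneg)
  have FGprops: "admissible n r G (FG xs) \<and> p ^ ((n+1) * r) * q ^ sum_list xs \<le> wR (FG xs)"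
    if len: "length xs = n" for xs
  proof -
    obtain S j k where Fx: "F xs = (S, j, k)" by (cases "F xs")
    have pa: "padm M r (S, j, k)" and bd: "\<forall>u. S u \<le> r + sum_list xs"
      using F len cV Fx unfolding fam_def by (metis fst_conv)+
    have FGx: "FG xs = (TS n \<tau> S, TS n \<tau> j, TS n \<tau> k)" by (simp add: FG_def Fx)
    have bd2: "\<forall>x\<in>leaves n G. mom r (TS n \<tau> S) (TS n \<tau> j) (TS n \<tau> k) x \<le> r + sum_list xs"
    proof
      fix x :: vend
      have jk: "TS n \<tau> j (fst x) \<le> TS n \<tau> S (fst x)" "TS n \<tau> k (fst x) \<le> TS n \<tau> S (fst x)"
        using padm_D(2)[OF pa] by (auto simp: TS_def)
      have "TS n \<tau> S (fst x) \<le> r + sum_list xs" using bd by (auto simp: TS_def)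
      then show "mom r (TS n \<tau> S) (TS n \<tau> j) (TS n \<tau> k) x \<le> r + sum_list xs"
        using mom_le[of "TS n \<tau> j" x "TS n \<tau> S" "TS n \<tau> k" r] jk by simp
    qed
    have "(p ^ (r + sum_list xs)) ^ (n + 1) \<le> wR (FG xs)"
      unfolding FGx wR_def prod.case
      by (rule weight_bound[OF card_leaves[OF assms(4)]]) (use assms(1,2) bd2 in auto)
    moreover have "(p ^ (r + sum_list xs)) ^ (n + 1) = p ^ ((n+1) * r) * q ^ sum_list xs"
      unfolding q_def by (simp add: power_mult[symmetric] power_add[symmetric] algebra_simps)
    ultimately show ?thesis using admT[OF pa] FGx by simp
  qed
  have FGinj: "inj_on FG {xs. length xs = n}"
  proof (rule inj_onI)
    fix xs ys assume xs: "xs \<in> {xs. length xs = n}" and ys: "ys \<in> {xs. length xs = n}" and eq: "FG xs = FG ys"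
    obtain S j k where Fx: "F xs = (S, j, k)" by (cases "F xs")
    obtain S2 j2 k2 where Fy: "F ys = (S2, j2, k2)" by (cases "F ys")
    have pa: "padm M r (S, j, k)" "padm M r (S2, j2, k2)"
      using F xs ys cV Fx Fy unfolding fam_def by (metis mem_Collect_eq)+
    have z: "\<forall>u. u \<notin> pV M \<longrightarrow> S u = 0 \<and> j u = 0 \<and> k u = 0" "\<forall>u. u \<notin> pV M \<longrightarrow> S2 u = 0 \<and> j2 u = 0 \<and> k2 u = 0"
      using padm_D(1)[OF pa(1)] padm_D(1)[OF pa(2)] by auto
    have e3: "TS n \<tau> S = TS n \<tau> S2" "TS n \<tau> j = TS n \<tau> j2" "TS n \<tau> k = TS n \<tau> k2"
      using eq by (simp_all add: FG_def Fx Fy)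
    have "S = S2" by (rule TS_inj) (use z e3 in auto)
    moreover have "j = j2" by (rule TS_inj) (use z e3 in auto)
    moreover have "k = k2" by (rule TS_inj) (use z e3 in auto)
    ultimately have "F xs = F ys" using Fx Fy by simp
    then show "xs = ys" using F xs ys cV unfolding fam_def inj_on_def by auto
  qed
  let ?I = "infsum (\<lambda>A. ennreal (wR A)) {A. admissible n r G A}"
  have amp: "amplitude p n r G = ennreal (1 / (1 / (1 - p)) ^ n) * ?I"
    unfolding amplitude_def wR_def
    by (intro arg_cong2[where f = "(*)"] refl infsum_cong) (auto split: prod.splits)
  have keyK: "ennreal (p ^ ((n+1) * r) * (\<Sum>a<K. q ^ a) ^ n) \<le> ?I" for K
  proof -
    have sub: "Bset K n \<subseteq> {xs. length xs = n}" unfolding Bset_def by auto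
    have "p ^ ((n+1) * r) * (\<Sum>a<K. q ^ a) ^ n = (\<Sum>xs\<in>Bset K n. p ^ ((n+1) * r) * q ^ sum_list xs)"
      by (simp only: sum_distrib_left[symmetric] Bset_sum)
    also have "\<dots> \<le> (\<Sum>xs\<in>Bset K n. wR (FG xs))"
      by (rule sum_mono) (use FGprops sub in auto)
    finally have "ennreal (p ^ ((n+1) * r) * (\<Sum>a<K. q ^ a) ^ n) \<le> ennreal (\<Sum>xs\<in>Bset K n. wR (FG xs))"
      by (rule ennreal_leI)
    also have "\<dots> = (\<Sum>xs\<in>Bset K n. ennreal (wR (FG xs)))"
      by (rule sum_ennreal[symmetric]) (rule wR0)
    also have "\<dots> = (\<Sum>A\<in>FG ` Bset K n. ennreal (wR A))"
      by (rule sum.reindex[symmetric, unfolded comp_def]) (rule inj_on_subset[OF FGinj sub])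
    also have "\<dots> \<le> ?I"
    proof -
      have "?I = (SUP F\<in>{F. finite F \<and> F \<subseteq> {A. admissible n r G A}}. sum (\<lambda>A. ennreal (wR A)) F)"
        by (rule nonneg_infsum_complete) simp
      moreover have "(\<Sum>A\<in>FG ` Bset K n. ennreal (wR A)) \<le> (SUP F\<in>{F. finite F \<and> F \<subseteq> {A. admissible n r G A}}. sum (\<lambda>A. ennreal (wR A)) F)"
        by (rule SUP_upper) (use FGprops sub Bset_finite in auto)
      ultimately show ?thesis by simp
    qed
    finally show ?thesis .
  qed
  define c0 where "c0 = 1 / (1 / (1 - p)) ^ n"
  have c00: "0 \<le> c0" unfolding c0_def using assms(2) by simp
  have P0: "0 \<le> p ^ ((n+1) * r)" using assms(1) by simp
  have q0: "0 \<le> q" "q < 1" unfolding q_def using assms(1,2) power_strict_decreasing[of 0 "n+1" p] by auto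
  have hK: "ennreal (c0 * (p ^ ((n+1) * r) * (\<Sum>a<K. q ^ a) ^ n)) \<le> amplitude p n r G" for K
  proof -
    have "0 \<le> (\<Sum>a<K. q ^ a)" using q0 by (auto intro: sum_nonneg)
    then have "ennreal (c0 * (p ^ ((n+1) * r) * (\<Sum>a<K. q ^ a) ^ n)) = ennreal c0 * ennreal (p ^ ((n+1) * r) * (\<Sum>a<K. q ^ a) ^ n)"
      using c00 P0 by (intro ennreal_mult) auto
    also have "\<dots> \<le> ennreal c0 * ?I" by (rule mult_left_mono[OF keyK]) simp
    finally show ?thesis using amp c0_def by simp
  qed
  have lim: "(\<lambda>K. \<Sum>a<K. q ^ a) \<longlonglongrightarrow> 1 / (1 - q)"
    using geometric_sums[of q] q0 unfolding sums_def by simp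
  have lim2: "(\<lambda>K. ennreal (c0 * (p ^ ((n+1) * r) * (\<Sum>a<K. q ^ a) ^ n))) \<longlonglongrightarrow>
      ennreal (c0 * (p ^ ((n+1) * r) * (1 / (1 - q)) ^ n))"
    by (intro tendsto_ennrealI tendsto_mult tendsto_const tendsto_power lim)
  have "ennreal (c0 * (p ^ ((n+1) * r) * (1 / (1 - q)) ^ n)) \<le> amplitude p n r G"
    by (rule LIMSEQ_le_const2[OF lim2]) (use hK in auto)
  moreover have "ennreal (p ^ ((2 * n + 1) * r) / (2 * real n + 1) ^ n) \<le> ennreal (c0 * (p ^ ((n+1) * r) * (1 / (1 - q)) ^ n))"
    using real_final[OF assms(1,2), of n r] unfolding c0_def q_def
    by (intro ennreal_leI) (simp add: mult.assoc)
  ultimately show ?thesis by (rule order_trans[rotated])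
qed

end
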